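(* Let $R$ be a ring with unit. Let $\mathcal{Z} = (Z^-\xrightarrow{\zeta^-}Z\xleftarrow{\zeta^+}Z^+)$ and $\mathcal{Y}=(Y^-\xrightarrow{\upsilon^-}Y\xleftarrow{\upsilon^+}Y^+)$ be sheaves on $\mathbb{P}^1$ over $R$, and let $f\colon Z\to Y$ be a homomorphism of $R[x,x^{-1}]$-modules. Suppose that $Z^-$ is finitely generated over $R[x^{-1}]$ and $Z^+$ is finitely generated over $R[x]$, and that $\upsilon^-$ and $\upsilon^+$ are injective. Then there exist integers $k,\ell\geq 0$, an $R[x^{-1}]$-linear map $f^-\colon Z^-\to Y^-$ and an $R[x]$-linear map $f^+\colon Z^+\to Y^+$ such that $f\circ\zeta^- = x^k\upsilon^-\circ f^-$ and $f\circ\zeta^+ = x^{-\ell}\upsilon^+\circ f^+$. In particular $(f^-,f,f^+)$ is a morphism of sheaves from $\mathcal{Z}$ to the twist $\mathcal{Y}(k+\ell) = (Y^-\xrightarrow{x^k\upsilon^-}Y\xleftarrow{x^{-\ell}\upsilon^+}Y^+)$.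
   Context: Modules are right modules. A sheaf on $\mathbb{P}^1$ over $R$ is a diagram $M^- \xrightarrow{\mu^-} M \xleftarrow{\mu^+} M^+$ where $M^-$ is an $R[x^{-1}]$-module, $M$ an $R[x,x^{-1}]$-module, $M^+$ an $R[x]$-module, $\mu^-$ is $R[x^{-1}]$-linear, $\mu^+$ is $R[x]$-linear, and the adjoint maps $M^-\otimes_{R[x^{-1}]}R[x,x^{-1}]\to M$ and $M^+\otimes_{R[x]}R[x,x^{-1}]\to M$ are isomorphisms; morphisms of sheaves are triples of linear maps compatible with the structure maps. For a sheaf $\mathcal{M}$ and integer $n$, a twist $\mathcal{M}(n)$ is any sheaf $M^-\xrightarrow{x^k\mu^-}M\xleftarrow{x^{-\ell}\mu^+}M^+$ with $k+\ell=n$. *)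

theory Defs
  imports Main
begin

text \<open>A right R[x]-module (resp. R[x^-1]-module) is a right R-module together with the
R-linear endomorphism T giving the action of x (resp. of x^-1); a right
R[x,x^-1]-module is one where that endomorphism (action of x) is bijective.\<close>

definition rmod :: "('m::ab_group_add \<Rightarrow> 'r::ring_1 \<Rightarrow> 'm) \<Rightarrow> bool" where
  "rmod sm \<longleftrightarrow>
     (\<forall>m n r. sm (m + n) r = sm m r + sm n r) \<and>
     (\<forall>m r s. sm m (r + s) = sm m r + sm m s) \<and>
     (\<forall>m r s. sm m (r * s) = sm (sm m r) s) \<and>
     (\<forall>m. sm m 1 = m)"

definition rlin :: "('a::ab_group_add \<Rightarrow> 'r::ring_1 \<Rightarrow> 'a) \<Rightarrow> ('b::ab_group_add \<Rightarrow> 'r \<Rightarrow> 'b)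
                    \<Rightarrow> ('a \<Rightarrow> 'b) \<Rightarrow> bool" where
  "rlin sa sb f \<longleftrightarrow> (\<forall>m n. f (m + n) = f m + f n) \<and> (\<forall>m r. f (sa m r) = sb (f m) r)"

definition polymod :: "('m::ab_group_add \<Rightarrow> 'r::ring_1 \<Rightarrow> 'm) \<Rightarrow> ('m \<Rightarrow> 'm) \<Rightarrow> bool" where
  "polymod sm T \<longleftrightarrow> rmod sm \<and> rlin sm sm T"

definition laurentmod :: "('m::ab_group_add \<Rightarrow> 'r::ring_1 \<Rightarrow> 'm) \<Rightarrow> ('m \<Rightarrow> 'm) \<Rightarrow> bool" where
  "laurentmod sm X \<longleftrightarrow> polymod sm X \<and> bij X"

definition polylin :: "('a::ab_group_add \<Rightarrow> 'r::ring_1 \<Rightarrow> 'a) \<Rightarrow> ('a \<Rightarrow> 'a)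
                       \<Rightarrow> ('b::ab_group_add \<Rightarrow> 'r \<Rightarrow> 'b) \<Rightarrow> ('b \<Rightarrow> 'b) \<Rightarrow> ('a \<Rightarrow> 'b) \<Rightarrow> bool" where
  "polylin sa Ta sb Tb f \<longleftrightarrow> rlin sa sb f \<and> (\<forall>m. f (Ta m) = Tb (f m))"

definition polyfg :: "('m::ab_group_add \<Rightarrow> 'r::ring_1 \<Rightarrow> 'm) \<Rightarrow> ('m \<Rightarrow> 'm) \<Rightarrow> bool" where
  "polyfg sm T \<longleftrightarrow> (\<exists>G. finite G \<and>
      (\<forall>m. \<exists>(c::'m \<Rightarrow> nat \<Rightarrow> 'r) d. m = (\<Sum>g\<in>G. \<Sum>i<d. sm ((T ^^ i) g) (c g i))))"

text \<open>The adjoint map  N \<otimes>_{R[t]} R[t,t^-1] \<rightarrow> M  of an R[t]-linear map mu : N \<rightarrow> M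
  (T = action of t on N, U = action of t on M, bijective) is bijective.
  Since t is central, N \<otimes>_{R[t]} R[t,t^-1] is the localisation of N at the powers of t,
  whose elements are the fractions n \<otimes> t^-k, with n \<otimes> t^-k = n' \<otimes> t^-k' iff
  T^(k'+j) n = T^(k+j) n' for some j; the adjoint sends n \<otimes> t^-k to U^-k (mu n).\<close>
definition adjoint_bij :: "('n \<Rightarrow> 'n) \<Rightarrow> ('m \<Rightarrow> 'm) \<Rightarrow> ('n \<Rightarrow> 'm) \<Rightarrow> bool" where
  "adjoint_bij T U mu \<longleftrightarrow>
     (\<forall>y. \<exists>n k. (U ^^ k) y = mu n) \<and>
     (\<forall>n n' k k'. (U ^^ k') (mu n) = (U ^^ k) (mu n') \<longrightarrow>
                  (\<exists>j. (T ^^ (k' + j)) n = (T ^^ (k + j)) n'))"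

text \<open>A sheaf on P^1 over R:  M^- --mu^- --> M <-- mu^+ -- M^+ .
  smm, Sm: right R-action and action of x^-1 on M^-;
  sm, X: right R-action and action of x on M;
  smp, Tp: right R-action and action of x on M^+.\<close>
definition is_sheaf ::
  "('mm::ab_group_add \<Rightarrow> 'r::ring_1 \<Rightarrow> 'mm) \<Rightarrow> ('mm \<Rightarrow> 'mm) \<Rightarrow> ('mm \<Rightarrow> 'm)
   \<Rightarrow> ('m::ab_group_add \<Rightarrow> 'r \<Rightarrow> 'm) \<Rightarrow> ('m \<Rightarrow> 'm)
   \<Rightarrow> ('mp::ab_group_add \<Rightarrow> 'r \<Rightarrow> 'mp) \<Rightarrow> ('mp \<Rightarrow> 'mp) \<Rightarrow> ('mp \<Rightarrow> 'm) \<Rightarrow> bool" where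
  "is_sheaf smm Sm mum sm X smp Tp mup \<longleftrightarrow>
     polymod smm Sm \<and> laurentmod sm X \<and> polymod smp Tp \<and>
     polylin smm Sm sm (inv X) mum \<and> polylin smp Tp sm X mup \<and>
     adjoint_bij Sm (inv X) mum \<and> adjoint_bij Tp X mup"

end

theory Submission
  imports Defs
begin

lemma addz: "\<forall>m n. g (m+n) = g m + g n \<Longrightarrow> g (0::'a::ab_group_add) = (0::'b::ab_group_add)"
  by (metis add.right_neutral add_left_cancel)

lemma rlin_pow: "rlin s s U \<Longrightarrow> rlin s s (U ^^ k)"
  by (induction k) (auto simp: rlin_def)

lemma rlin_inv:
  assumes "rlin s s U" "\<forall>y. U (V y) = y" "\<forall>y. V (U y) = y"
  shows "rlin s s V"
  using assms unfolding rlin_def by metis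

lemma pow_comm: "(\<forall>n. g (T n) = U (g n)) \<Longrightarrow> g ((T ^^ k) n) = (U ^^ k) (g n)"
  by (induction k) auto

lemma closed_sum:
  assumes "P 0" "\<And>a b. P a \<Longrightarrow> P b \<Longrightarrow> P (a + b)" "\<And>x. x \<in> A \<Longrightarrow> P (h x)"
  shows "P (sum h A)"
proof (cases "finite A")
  case True
  then show ?thesis using assms(3)
    by (induction A rule: finite_induct) (auto intro: assms(1,2))
qed (simp add: assms(1))

lemma side:
  fixes smA :: "'a::ab_group_add \<Rightarrow> 'r::ring_1 \<Rightarrow> 'a" and TA :: "'a \<Rightarrow> 'a"
    and zeta :: "'a \<Rightarrow> 'z::ab_group_add" and smZ :: "'z \<Rightarrow> 'r \<Rightarrow> 'z" and UZ :: "'z \<Rightarrow> 'z"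
    and smY :: "'y::ab_group_add \<Rightarrow> 'r \<Rightarrow> 'y" and UY VY :: "'y \<Rightarrow> 'y"
    and smB :: "'b::ab_group_add \<Rightarrow> 'r \<Rightarrow> 'b" and TB :: "'b \<Rightarrow> 'b"
    and ups :: "'b \<Rightarrow> 'y" and f :: "'z \<Rightarrow> 'y"
  assumes zeta: "polylin smA TA smZ UZ zeta"
    and f1: "rlin smZ smY f" and f2: "\<forall>z. f (UZ z) = UY (f z)"
    and U1: "rlin smY smY UY" and U2: "\<forall>y. UY (VY y) = y" and U3: "\<forall>y. VY (UY y) = y"
    and ups: "polylin smB TB smY UY ups" and inj: "inj ups"
    and srj: "\<forall>y. \<exists>n k. (UY ^^ k) y = ups n"
    and fg: "polyfg smA TA"
  shows "\<exists>K fm. polylin smA TA smB TB fm \<and> (\<forall>z. f (zeta z) = (VY ^^ K) (ups (fm z)))"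
proof -
  obtain G where G: "finite G"
    and Gsp: "\<forall>m. \<exists>(c::'a \<Rightarrow> nat \<Rightarrow> 'r) d. m = (\<Sum>g\<in>G. \<Sum>i<d. smA ((TA ^^ i) g) (c g i))"
    using fg unfolding polyfg_def by blast
  define kk where "kk g = (SOME k. \<exists>n. (UY ^^ k) (f (zeta g)) = ups n)" for g
  have kk: "\<exists>n. (UY ^^ kk g) (f (zeta g)) = ups n" for g
  proof -
    have "\<exists>k n. (UY ^^ k) (f (zeta g)) = ups n" using srj by blast
    then show ?thesis unfolding kk_def by (rule someI_ex)
  qed
  define K where "K = Max (insert 0 (kk ` G))"
  have Kge: "g \<in> G \<Longrightarrow> kk g \<le> K" for g unfolding K_def using G by simp
  define h where "h z = (UY ^^ K) (f (zeta z))" for z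
  have UK: "rlin smY smY (UY ^^ K)" using rlin_pow[OF U1] .
  have zl: "rlin smA smZ zeta" "\<forall>n. zeta (TA n) = UZ (zeta n)" using zeta by (auto simp: polylin_def)
  have ul: "rlin smB smY ups" "\<forall>n. ups (TB n) = UY (ups n)" using ups by (auto simp: polylin_def)
  have hadd: "h (a + b) = h a + h b" for a b
    using zl(1) f1 UK by (simp add: h_def rlin_def)
  have hsm: "h (smA a r) = smY (h a) r" for a r
    using zl(1) f1 UK by (simp add: h_def rlin_def)
  have hT: "h (TA a) = UY (h a)" for a
    using zl(2) f2 by (simp add: h_def funpow_swap1)
  have h0: "h 0 = 0" by (rule addz) (simp add: hadd)
  have u0: "ups 0 = 0" by (rule addz) (use ul(1) in \<open>simp add: rlin_def\<close>)
  define P where "P z = (\<exists>b. h z = ups b)" for z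
  have P0: "P 0" unfolding P_def using h0 u0 by metis
  have Padd: "P (a + b)" if "P a" "P b" for a b
    using that ul(1) unfolding P_def rlin_def by (metis hadd)
  have Psm: "P (smA a r)" if "P a" for a r
    using that ul(1) unfolding P_def rlin_def by (metis hsm)
  have PT: "P (TA a)" if "P a" for a
    using that ul(2) unfolding P_def by (metis hT)
  have PTi: "P ((TA ^^ i) a)" if "P a" for a i
    using that by (induction i) (auto intro: PT)
  have PG: "P g" if "g \<in> G" for g
  proof -
    obtain n where n: "(UY ^^ kk g) (f (zeta g)) = ups n" using kk by blast
    have "h g = (UY ^^ (K - kk g)) ((UY ^^ kk g) (f (zeta g)))"
    proof -
      have "K = (K - kk g) + kk g" using Kge[OF that] by simp
      then have "UY ^^ K = UY ^^ (K - kk g) \<circ> UY ^^ kk g" by (metis funpow_add)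
      then show ?thesis unfolding h_def by simp
    qed
    also have "\<dots> = ups ((TB ^^ (K - kk g)) n)" using n pow_comm[OF ul(2)] by simp
    finally show ?thesis unfolding P_def by blast
  qed
  have Pall: "P z" for z
  proof -
    obtain c d where "z = (\<Sum>g\<in>G. \<Sum>i<d. smA ((TA ^^ i) g) (c g i))" using Gsp by blast
    moreover have "P (\<Sum>g\<in>G. \<Sum>i<d. smA ((TA ^^ i) g) (c g i))"
    proof (rule closed_sum[where P=P, OF P0 Padd])
      fix g assume g: "g \<in> G"
      show "P (\<Sum>i<d. smA ((TA ^^ i) g) (c g i))"
        by (rule closed_sum[where P=P, OF P0 Padd]) (auto intro: Psm PTi PG g)
    qed auto
    ultimately show ?thesis by simp
  qed
  define fm where "fm z = inv ups (h z)" for z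
  have ufm: "ups (fm z) = h z" for z
    using Pall[of z] inj unfolding P_def fm_def by (metis inv_f_f)
  have "polylin smA TA smB TB fm"
    unfolding polylin_def rlin_def
  proof (intro conjI allI)
    fix m n show "fm (m + n) = fm m + fm n"
      using inj ul(1) ufm hadd unfolding rlin_def by (metis injD)
  next
    fix m r show "fm (smA m r) = smB (fm m) r"
      using inj ul(1) ufm hsm unfolding rlin_def by (metis injD)
  next
    fix m show "fm (TA m) = TB (fm m)"
      using inj ul(2) ufm hT by (metis injD)
  qed
  moreover have "f (zeta z) = (VY ^^ K) (ups (fm z))" for z
  proof -
    have "(VY ^^ K) ((UY ^^ K) y) = y" for y
    proof (induction K arbitrary: y)
      case (Suc K)
      have "(VY ^^ Suc K) ((UY ^^ Suc K) y) = (VY ^^ K) (VY (UY ((UY ^^ K) y)))"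
        by (simp only: funpow_Suc_right comp_def) (simp add: funpow_swap1)
      then show ?case using Suc U3 by simp
    qed simp
    then show ?thesis by (simp add: ufm h_def)
  qed
  ultimately show ?thesis by blast
qed

theorem mainTheorem6:
  fixes smZm :: "'zm::ab_group_add \<Rightarrow> 'r::ring_1 \<Rightarrow> 'zm" and SZ :: "'zm \<Rightarrow> 'zm"
    and zetam :: "'zm \<Rightarrow> 'z::ab_group_add"
    and smZ :: "'z \<Rightarrow> 'r \<Rightarrow> 'z" and XZ :: "'z \<Rightarrow> 'z"
    and smZp :: "'zp::ab_group_add \<Rightarrow> 'r \<Rightarrow> 'zp" and TZ :: "'zp \<Rightarrow> 'zp"
    and zetap :: "'zp \<Rightarrow> 'z"
    and smYm :: "'ym::ab_group_add \<Rightarrow> 'r \<Rightarrow> 'ym" and SY :: "'ym \<Rightarrow> 'ym"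
    and upsm :: "'ym \<Rightarrow> 'y::ab_group_add"
    and smY :: "'y \<Rightarrow> 'r \<Rightarrow> 'y" and XY :: "'y \<Rightarrow> 'y"
    and smYp :: "'yp::ab_group_add \<Rightarrow> 'r \<Rightarrow> 'yp" and TY :: "'yp \<Rightarrow> 'yp"
    and upsp :: "'yp \<Rightarrow> 'y"
    and f :: "'z \<Rightarrow> 'y"
  assumes Zsheaf: "is_sheaf smZm SZ zetam smZ XZ smZp TZ zetap"
    and Ysheaf: "is_sheaf smYm SY upsm smY XY smYp TY upsp"
    and f_lin: "polylin smZ XZ smY XY f"
    and Zm_fg: "polyfg smZm SZ"
    and Zp_fg: "polyfg smZp TZ"
    and upsm_inj: "inj upsm"
    and upsp_inj: "inj upsp"
  shows "\<exists>(k::nat) (l::nat) (fm :: 'zm \<Rightarrow> 'ym) (fp :: 'zp \<Rightarrow> 'yp).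
           polylin smZm SZ smYm SY fm \<and> polylin smZp TZ smYp TY fp \<and>
           (\<forall>z. f (zetam z) = (XY ^^ k) (upsm (fm z))) \<and>
           (\<forall>z. f (zetap z) = (inv XY ^^ l) (upsp (fp z)))"
proof -
  have bZ: "bij XZ" and bY: "bij XY" and XYl: "rlin smY smY XY"
    using Zsheaf Ysheaf by (auto simp: is_sheaf_def laurentmod_def polymod_def)
  have Y1: "\<forall>y. XY (inv XY y) = y" "\<forall>y. inv XY (XY y) = y"
    using bY by (auto simp: bij_is_surj surj_f_inv_f bij_is_inj inv_f_f)
  have Z1: "\<forall>y. XZ (inv XZ y) = y" "\<forall>y. inv XZ (XZ y) = y"
    using bZ by (auto simp: bij_is_surj surj_f_inv_f bij_is_inj inv_f_f)
  have f1: "rlin smZ smY f" and f2: "\<forall>z. f (XZ z) = XY (f z)"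
    using f_lin by (auto simp: polylin_def)
  have f3: "\<forall>z. f (inv XZ z) = inv XY (f z)"
    using f2 Z1 Y1 by metis
  have iXYl: "rlin smY smY (inv XY)" using rlin_inv[OF XYl Y1] .
  obtain k fm where m: "polylin smZm SZ smYm SY fm" "\<forall>z. f (zetam z) = (XY ^^ k) (upsm (fm z))"
    apply (rule exE[OF exE[OF side[where UY="inv XY" and VY=XY and UZ="inv XZ", OF _ f1 f3 iXYl Y1(2) Y1(1) _ upsm_inj _ Zm_fg]]])
    using Zsheaf Ysheaf by (auto simp: is_sheaf_def adjoint_bij_def)
  obtain l fp where p: "polylin smZp TZ smYp TY fp" "\<forall>z. f (zetap z) = (inv XY ^^ l) (upsp (fp z))"
    apply (rule exE[OF exE[OF side[where UY=XY and VY="inv XY" and UZ=XZ, OF _ f1 f2 XYl Y1(1) Y1(2) _ upsp_inj _ Zp_fg]]])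
    using Zsheaf Ysheaf by (auto simp: is_sheaf_def adjoint_bij_def)
  show ?thesis using m p by blast
qed

end
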